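(* Consider an implication of canonical form $(\ast)$ and an environment $\eta$ such that there is exactly one conjunct ($M=1$) and $\Pi(1)\ge\Omega(j)$ for all $1\le j\le N$. If the implication is unary $\eta$-valid, then the Parametricity Condition holds for it and $\eta$.
   Context: $\mathsf{Heap}$: finite partial functions $\mathsf{PosInt}\to\mathsf{Int}$; $g\sqsubseteq h$ means $h$ extends $g$; $h\cdot g$ union of disjoint heaps; componentwise on $\mathsf{Heap}^n$. $\mathsf{IRel}_n$: upward closed subsets of $\mathsf{Heap}^n$; $p*q=\{\mathbf f\cdot\mathbf g\mid\mathbf f\in p,\mathbf g\in q,\text{componentwise disjoint}\}$; $\Delta_n(X)=\{(h_1,\dots,h_n)\mid\exists f\in X.\ \forall k.\ f\sqsubseteq h_k\}$. Assertions: built from primitive assertions $P$, assertion variables, $\mathsf{true},\mathsf{false},\wedge,\vee,*$, quantifiers over integer variables. $n$-ary meaning under $\eta$ and $\rho:\mathsf{AVar}\to\mathsf{IRel}_n$: $[\![P]\!]^n=\Delta_n([\![P]\!]^{\mathrm{prim}}_\eta)$, $[\![a]\!]^n=\rho(a)$, connectives by $\mathsf{Heap}^n,\emptyset,\cap,\cup,*$, quantifiers by unions/intersections. $n$-ary $\eta$-validity of $\varphi\Rightarrow\psi$: $[\![\varphi]\!]^n_{\eta,\rho}\subseteq[\![\psi]\!]^n_{\eta,\rho}$ for all $\rho:\mathsf{AVar}\to\mathsf{IRel}_n$ (unary: $n=1$). Canonical form $(\ast)$: $\bigwedge_{i=1}^M\varphi_i*a_{i,1}*\cdots*a_{i,M_i}\Rightarrow\bigvee_{j=1}^N\psi_j*b_{j,1}*\cdots*b_{j,N_j}$,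 $M\ge1$, $N\ge0$, $\varphi_i,\psi_j$ free of assertion variables, every $b_{j,k}$ among the $a_{i,k}$. $V=\{a_{i,k}\}$; $\Pi(i)(c)=|\{k\mid a_{i,k}=c\}|$, $\Omega(j)(c)=|\{k\mid b_{j,k}=c\}|$; $\Pi(i)\ge\Omega(j)$ iff $\Pi(i)(c)\ge\Omega(j)(c)$ for all $c\in V$. Disjunct $j$ is empty if $N_j=0$. Parametricity Condition: for all $h,h_1,\dots,h_M\in\mathsf{Heap}$ with $h_i\sqsubseteq h$ and $h_i\in[\![\varphi_i]\!]^1_\eta$ for all $i$, either (1) there are $i,j$ with $h_i\in[\![\psi_j]\!]^1_\eta$ and $\Pi(i)\ge\Omega(j)$, or (2) there is an empty disjunct $j$ with $h\in[\![\psi_j]\!]^1_\eta$. *)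

theory Defs
  imports Main
begin

typedef heap = "{h :: nat \<rightharpoonup> int. finite (dom h) \<and> 0 \<notin> dom h}"
  by (rule exI[of _ Map.empty]) auto

definition hsub :: "heap \<Rightarrow> heap \<Rightarrow> bool" (infix "\<sqsubseteq>" 50) where
  "g \<sqsubseteq> h \<longleftrightarrow> Rep_heap g \<subseteq>\<^sub>m Rep_heap h"

definition hdisj :: "heap \<Rightarrow> heap \<Rightarrow> bool" where
  "hdisj g h \<longleftrightarrow> dom (Rep_heap g) \<inter> dom (Rep_heap h) = {}"

definition hunion :: "heap \<Rightarrow> heap \<Rightarrow> heap" where
  "hunion g h = Abs_heap (Rep_heap g ++ Rep_heap h)"

definition upclosed :: "heap set \<Rightarrow> bool" where
  "upclosed X \<longleftrightarrow> (\<forall>g h. g \<in> X \<longrightarrow> g \<sqsubseteq> h \<longrightarrow> h \<in> X)"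

definition sepstar :: "heap set \<Rightarrow> heap set \<Rightarrow> heap set" where
  "sepstar p q = {hunion f g | f g. f \<in> p \<and> g \<in> q \<and> hdisj f g}"

definition Delta1 :: "heap set \<Rightarrow> heap set" where
  "Delta1 X = {h. \<exists>f\<in>X. f \<sqsubseteq> h}"

datatype ('p, 'v, 'a) assn =
    Prim 'p
  | AVar 'a
  | ATrue
  | AFalse
  | AConj "('p, 'v, 'a) assn" "('p, 'v, 'a) assn"
  | ADisj "('p, 'v, 'a) assn" "('p, 'v, 'a) assn"
  | AStar "('p, 'v, 'a) assn" "('p, 'v, 'a) assn"
  | AEx 'v "('p, 'v, 'a) assn"
  | AAll 'v "('p, 'v, 'a) assn"

fun avars :: "('p, 'v, 'a) assn \<Rightarrow> 'a set" where
  "avars (Prim P) = {}"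
| "avars (AVar a) = {a}"
| "avars ATrue = {}"
| "avars AFalse = {}"
| "avars (AConj p q) = avars p \<union> avars q"
| "avars (ADisj p q) = avars p \<union> avars q"
| "avars (AStar p q) = avars p \<union> avars q"
| "avars (AEx x p) = avars p"
| "avars (AAll x p) = avars p"

text \<open>Unary meaning; prim gives the primitive semantics [[P]]^prim_eta.\<close>
fun sem :: "('p \<Rightarrow> ('v \<Rightarrow> int) \<Rightarrow> heap set) \<Rightarrow> ('v \<Rightarrow> int) \<Rightarrow> ('a \<Rightarrow> heap set)
             \<Rightarrow> ('p, 'v, 'a) assn \<Rightarrow> heap set" where
  "sem prim \<eta> \<rho> (Prim P) = Delta1 (prim P \<eta>)"
| "sem prim \<eta> \<rho> (AVar a) = \<rho> a"
| "sem prim \<eta> \<rho> ATrue = UNIV"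
| "sem prim \<eta> \<rho> AFalse = {}"
| "sem prim \<eta> \<rho> (AConj p q) = sem prim \<eta> \<rho> p \<inter> sem prim \<eta> \<rho> q"
| "sem prim \<eta> \<rho> (ADisj p q) = sem prim \<eta> \<rho> p \<union> sem prim \<eta> \<rho> q"
| "sem prim \<eta> \<rho> (AStar p q) = sepstar (sem prim \<eta> \<rho> p) (sem prim \<eta> \<rho> q)"
| "sem prim \<eta> \<rho> (AEx x p) = (\<Union>n. sem prim (\<eta>(x := n)) \<rho> p)"
| "sem prim \<eta> \<rho> (AAll x p) = (\<Inter>n. sem prim (\<eta>(x := n)) \<rho> p)"

definition valid1 :: "('p \<Rightarrow> ('v \<Rightarrow> int) \<Rightarrow> heap set) \<Rightarrow> ('v \<Rightarrow> int)
                      \<Rightarrow> ('p, 'v, 'a) assn \<Rightarrow> ('p, 'v, 'a) assn \<Rightarrow> bool" where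
  "valid1 prim \<eta> \<phi> \<psi> \<longleftrightarrow>
     (\<forall>\<rho>. (\<forall>a. upclosed (\<rho> a)) \<longrightarrow> sem prim \<eta> \<rho> \<phi> \<subseteq> sem prim \<eta> \<rho> \<psi>)"

text \<open>A term phi * a_1 * ... * a_k, represented as a pair (phi, [a_1,...,a_k]).\<close>
definition star_list :: "('p, 'v, 'a) assn \<Rightarrow> 'a list \<Rightarrow> ('p, 'v, 'a) assn" where
  "star_list \<phi> as = foldl (\<lambda>acc a. AStar acc (AVar a)) \<phi> as"

definition big_conj :: "('p, 'v, 'a) assn list \<Rightarrow> ('p, 'v, 'a) assn" where
  "big_conj ps = foldr AConj ps ATrue"

definition big_disj :: "('p, 'v, 'a) assn list \<Rightarrow> ('p, 'v, 'a) assn" where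
  "big_disj ps = foldr ADisj ps AFalse"

text \<open>An implication in canonical form: lhs = list of conjuncts (phi_i, [a_i1..]),
  rhs = list of disjuncts (psi_j, [b_j1..]).\<close>
definition lhs_assn :: "(('p, 'v, 'a) assn \<times> 'a list) list \<Rightarrow> ('p, 'v, 'a) assn" where
  "lhs_assn L = big_conj (map (\<lambda>(\<phi>, as). star_list \<phi> as) L)"

definition rhs_assn :: "(('p, 'v, 'a) assn \<times> 'a list) list \<Rightarrow> ('p, 'v, 'a) assn" where
  "rhs_assn R = big_disj (map (\<lambda>(\<psi>, bs). star_list \<psi> bs) R)"

definition canonical ::
  "(('p, 'v, 'a) assn \<times> 'a list) list \<Rightarrow> (('p, 'v, 'a) assn \<times> 'a list) list \<Rightarrow> bool" where
  "canonical L R \<longleftrightarrow> length L \<ge> 1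
     \<and> (\<forall>(\<phi>, as) \<in> set L. avars \<phi> = {})
     \<and> (\<forall>(\<psi>, bs) \<in> set R. avars \<psi> = {})
     \<and> (\<forall>(\<psi>, bs) \<in> set R. set bs \<subseteq> (\<Union>(\<phi>, as) \<in> set L. set as))"

definition Vset :: "(('p, 'v, 'a) assn \<times> 'a list) list \<Rightarrow> 'a set" where
  "Vset L = (\<Union>(\<phi>, as) \<in> set L. set as)"

text \<open>Pi(i)(c) and Omega(j)(c), with 0-based indices i < M, j < N.\<close>
definition Pi :: "(('p, 'v, 'a) assn \<times> 'a list) list \<Rightarrow> nat \<Rightarrow> 'a \<Rightarrow> nat" where
  "Pi L i c = count_list (snd (L ! i)) c"

definition Omega :: "(('p, 'v, 'a) assn \<times> 'a list) list \<Rightarrow> nat \<Rightarrow> 'a \<Rightarrow> nat" where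
  "Omega R j c = count_list (snd (R ! j)) c"

definition Pi_ge_Omega ::
  "(('p, 'v, 'a) assn \<times> 'a list) list \<Rightarrow> (('p, 'v, 'a) assn \<times> 'a list) list \<Rightarrow> nat \<Rightarrow> nat \<Rightarrow> bool" where
  "Pi_ge_Omega L R i j \<longleftrightarrow> (\<forall>c \<in> Vset L. Pi L i c \<ge> Omega R j c)"

text \<open>Unary meaning of an assertion free of assertion variables (rho is irrelevant).\<close>
definition sem0 :: "('p \<Rightarrow> ('v \<Rightarrow> int) \<Rightarrow> heap set) \<Rightarrow> ('v \<Rightarrow> int) \<Rightarrow> ('p, 'v, 'a) assn \<Rightarrow> heap set" where
  "sem0 prim \<eta> \<phi> = sem prim \<eta> (\<lambda>_. UNIV) \<phi>"

definition param_cond ::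
  "('p \<Rightarrow> ('v \<Rightarrow> int) \<Rightarrow> heap set) \<Rightarrow> ('v \<Rightarrow> int)
   \<Rightarrow> (('p, 'v, 'a) assn \<times> 'a list) list \<Rightarrow> (('p, 'v, 'a) assn \<times> 'a list) list \<Rightarrow> bool" where
  "param_cond prim \<eta> L R \<longleftrightarrow>
    (\<forall>h hs. length hs = length L
       \<and> (\<forall>i < length L. hs ! i \<sqsubseteq> h \<and> hs ! i \<in> sem0 prim \<eta> (fst (L ! i)))
     \<longrightarrow> (\<exists>i < length L. \<exists>j < length R. hs ! i \<in> sem0 prim \<eta> (fst (R ! j)) \<and> Pi_ge_Omega L R i j)
       \<or> (\<exists>j < length R. snd (R ! j) = [] \<and> h \<in> sem0 prim \<eta> (fst (R ! j))))"

end

theory Submission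
  imports Defs
begin

lemma Rep_fin: "finite (dom (Rep_heap h))" and Rep_0: "0 \<notin> dom (Rep_heap h)"
  using Rep_heap[of h] by auto

lemma Rep_hunion: "Rep_heap (hunion f g) = Rep_heap f ++ Rep_heap g"
  unfolding hunion_def
  by (rule Abs_heap_inverse) (auto simp: Rep_fin Rep_0)

definition restr :: "heap \<Rightarrow> nat set \<Rightarrow> heap" where
  "restr h S = Abs_heap (Rep_heap h |` S)"

lemma Rep_restr: "Rep_heap (restr h S) = Rep_heap h |` S"
  unfolding restr_def
  by (rule Abs_heap_inverse) (auto simp: Rep_fin Rep_0 dom_restrict intro: finite_subset[OF _ Rep_fin[of h]])

definition hemp :: heap where "hemp = Abs_heap Map.empty"

lemma Rep_hemp: "Rep_heap hemp = Map.empty"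
  unfolding hemp_def by (rule Abs_heap_inverse) auto

lemma hunion_hemp: "hunion f hemp = f"
  by (simp add: Rep_heap_inject[symmetric] Rep_hunion Rep_hemp)

lemma hdisj_hemp: "hdisj f hemp"
  by (simp add: hdisj_def Rep_hemp)

lemma sub_hunion: "hdisj f g \<Longrightarrow> f \<sqsubseteq> hunion f g"
  unfolding hsub_def hdisj_def Rep_hunion
  by (metis map_add_comm map_le_map_add)

lemma hsub_trans: "a \<sqsubseteq> b \<Longrightarrow> b \<sqsubseteq> c \<Longrightarrow> a \<sqsubseteq> c"
  unfolding hsub_def using map_le_trans by blast

lemma upclosed_sepstar:
  assumes "upclosed p" "upclosed q" shows "upclosed (sepstar p q)"
  unfolding upclosed_def
proof (intro allI impI)
  fix x h' assume "x \<in> sepstar p q" and le: "x \<sqsubseteq> h'"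
  then obtain f g where x: "x = hunion f g" and fp: "f \<in> p" and gq: "g \<in> q" and d: "hdisj f g"
    unfolding sepstar_def by blast
  define g' where "g' = restr h' (- dom (Rep_heap f))"
  have le2: "Rep_heap f ++ Rep_heap g \<subseteq>\<^sub>m Rep_heap h'"
    using le x by (simp add: hsub_def Rep_hunion)
  have fle: "Rep_heap f \<subseteq>\<^sub>m Rep_heap h'"
    using le2 d unfolding hdisj_def by (metis map_add_comm map_le_map_add map_le_trans)
  have "g \<sqsubseteq> g'"
    unfolding hsub_def g'_def Rep_restr map_le_def
  proof (intro ballI)
    fix a assume a: "a \<in> dom (Rep_heap g)"
    then have "a \<notin> dom (Rep_heap f)" using d unfolding hdisj_def by blast
    moreover have "(Rep_heap f ++ Rep_heap g) a = Rep_heap g a" using a by (auto simp: map_add_def split: option.splits)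
    ultimately show "Rep_heap g a = (Rep_heap h' |` (- dom (Rep_heap f))) a"
      using le2 a unfolding map_le_def by (auto simp: restrict_map_def)
  qed
  hence g'q: "g' \<in> q" using gq assms(2) unfolding upclosed_def by blast
  have d': "hdisj f g'" unfolding hdisj_def g'_def Rep_restr by auto
  have "hunion f g' = h'"
    unfolding Rep_heap_inject[symmetric] Rep_hunion g'_def Rep_restr
  proof
    fix a show "(Rep_heap f ++ Rep_heap h' |` (- dom (Rep_heap f))) a = Rep_heap h' a"
      using fle unfolding map_le_def
      by (cases "a \<in> dom (Rep_heap f)") (auto simp: map_add_def restrict_map_def split: option.splits)
  qed
  thus "h' \<in> sepstar p q" using fp g'q d' unfolding sepstar_def by blast
qed

lemma upclosed_sem:
  assumes "\<forall>a. upclosed (\<rho> a)" shows "upclosed (sem prim \<eta> \<rho> \<phi>)"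
  using assms
proof (induction \<phi> arbitrary: \<eta>)
  case (Prim x) thus ?case unfolding upclosed_def using hsub_trans by (simp add: Delta1_def) blast
next
  case (AStar p q) thus ?case by (simp add: upclosed_sepstar)
next
  case (AAll v p) thus ?case unfolding upclosed_def by simp blast
qed (auto simp: upclosed_def)

lemma sepstar_UNIV: "p \<subseteq> sepstar p UNIV"
proof
  fix x assume "x \<in> p"
  thus "x \<in> sepstar p UNIV" unfolding sepstar_def
    by (intro CollectI exI[of _ x] exI[of _ hemp]) (simp add: hunion_hemp hdisj_hemp)
qed

lemma sepstar_UNIV_down: "upclosed p \<Longrightarrow> sepstar p UNIV \<subseteq> p"
  unfolding sepstar_def upclosed_def using sub_hunion by blast

lemma star_list_up:
  "sem prim \<eta> (\<lambda>_. UNIV) \<phi> \<subseteq> sem prim \<eta> (\<lambda>_. UNIV) (star_list \<phi> as)"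
proof (induction as arbitrary: \<phi>)
  case Nil thus ?case by (simp add: star_list_def)
next
  case (Cons a as)
  have "sem prim \<eta> (\<lambda>_. UNIV) \<phi> \<subseteq> sem prim \<eta> (\<lambda>_. UNIV) (AStar \<phi> (AVar a))"
    using sepstar_UNIV by simp
  also have "\<dots> \<subseteq> sem prim \<eta> (\<lambda>_. UNIV) (star_list (AStar \<phi> (AVar a)) as)" by (rule Cons)
  finally show ?case by (simp add: star_list_def)
qed

lemma star_list_down:
  "sem prim \<eta> (\<lambda>_. UNIV) (star_list \<phi> as) \<subseteq> sem prim \<eta> (\<lambda>_. UNIV) \<phi>"
proof (induction as arbitrary: \<phi>)
  case Nil thus ?case by (simp add: star_list_def)
next
  case (Cons a as)
  have up: "upclosed (sem prim \<eta> (\<lambda>_. UNIV) \<phi>)" by (rule upclosed_sem) (simp add: upclosed_def)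
  have "sem prim \<eta> (\<lambda>_. UNIV) (star_list (AStar \<phi> (AVar a)) as) \<subseteq> sem prim \<eta> (\<lambda>_. UNIV) (AStar \<phi> (AVar a))"
    by (rule Cons)
  also have "\<dots> \<subseteq> sem prim \<eta> (\<lambda>_. UNIV) \<phi>" using sepstar_UNIV_down[OF up] by simp
  finally show ?case by (simp add: star_list_def)
qed

lemma sem_big_disj: "h \<in> sem prim \<eta> \<rho> (big_disj xs) \<longleftrightarrow> (\<exists>x\<in>set xs. h \<in> sem prim \<eta> \<rho> x)"
  by (induction xs) (auto simp: big_disj_def)

theorem mainTheorem7:
  fixes prim :: "'p \<Rightarrow> ('v \<Rightarrow> int) \<Rightarrow> heap set"
    and \<eta> :: "'v \<Rightarrow> int"
    and L R :: "(('p, 'v, 'a) assn \<times> 'a list) list"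
  assumes "canonical L R"
    and "length L = 1"
    and "\<forall>j < length R. Pi_ge_Omega L R 0 j"
    and "valid1 prim \<eta> (lhs_assn L) (rhs_assn R)"
  shows "param_cond prim \<eta> L R"
  unfolding param_cond_def
proof (intro allI impI disjI1)
  fix h hs assume H: "length hs = length L \<and> (\<forall>i < length L. hs ! i \<sqsubseteq> h \<and> hs ! i \<in> sem0 prim \<eta> (fst (L ! i)))"
  obtain \<phi> as where L: "L = [(\<phi>, as)]" using assms(2)
    by (cases L) (auto)
  have h0: "hs ! 0 \<in> sem prim \<eta> (\<lambda>_. UNIV) \<phi>" using H L by (simp add: sem0_def)
  have "hs ! 0 \<in> sem prim \<eta> (\<lambda>_. UNIV) (lhs_assn L)"
    using star_list_up h0 by (force simp: L lhs_assn_def big_conj_def)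
  moreover have "sem prim \<eta> (\<lambda>_. UNIV) (lhs_assn L) \<subseteq> sem prim \<eta> (\<lambda>_. UNIV) (rhs_assn R)"
    using assms(4) unfolding valid1_def by (auto simp: upclosed_def)
  ultimately have "hs ! 0 \<in> sem prim \<eta> (\<lambda>_. UNIV) (rhs_assn R)" by blast
  then obtain x where x: "x \<in> set R" and hx: "hs ! 0 \<in> sem prim \<eta> (\<lambda>_. UNIV) (star_list (fst x) (snd x))"
    unfolding rhs_assn_def sem_big_disj by (auto split: prod.splits)
  then obtain j where j: "j < length R" "R ! j = x" by (auto simp: in_set_conv_nth)
  have "hs ! 0 \<in> sem0 prim \<eta> (fst (R ! j))"
    using star_list_down hx j by (force simp: sem0_def)
  thus "\<exists>i < length L. \<exists>j < length R. hs ! i \<in> sem0 prim \<eta> (fst (R ! j)) \<and> Pi_ge_Omega L R i j"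
    using j assms(2,3) by auto
qed

end
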